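(* Let $p\notin\{2,11\}$ be a prime with $p\equiv2\pmod3$ such that all three roots of $P(X)=X^3-X^2-X-1$ lie in $\mathbb Q_p$. For each $\lambda\in\Lambda$ let $\lambda^{1/3}$ denote the unique element of $\mathbb Z_p$ whose cube is $\lambda$. Then $\sum_{\lambda\in\Lambda}c_\lambda\lambda^{1/3}=0$.
   Context: $\Lambda$ is the set of roots of $P(X)=X^3-X^2-X-1$ (here contained in $\mathbb Z_p^\times$), and $c_\lambda=\lambda P'(\lambda)^{-1}$. Since $p\equiv2\pmod 3$, every element of $\mathbb Z_p^\times$ has exactly one cube root in $\mathbb Z_p$. *)

theory Defs
  imports "HOL-Computational_Algebra.Polynomial" "HOL-Number_Theory.Number_Theory"
begin

text \<open>The p-adic integers Z_p, modelled as the inverse limit of the rings Z/p^n Z: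
  an element is a coherent sequence of residues x n in {0..<p^n}.
  Ring operations are computed componentwise modulo p^n.\<close>

definition Zp :: "nat \<Rightarrow> (nat \<Rightarrow> int) set" where
  "Zp p = {x. \<forall>n. 0 \<le> x n \<and> x n < int p ^ n \<and> x (Suc n) mod (int p ^ n) = x n}"

definition pzero :: "nat \<Rightarrow> nat \<Rightarrow> int" where
  "pzero p = (\<lambda>n. 0)"

definition pone :: "nat \<Rightarrow> nat \<Rightarrow> int" where
  "pone p = (\<lambda>n. 1 mod (int p ^ n))"

definition padd :: "nat \<Rightarrow> (nat \<Rightarrow> int) \<Rightarrow> (nat \<Rightarrow> int) \<Rightarrow> nat \<Rightarrow> int" where
  "padd p x y = (\<lambda>n. (x n + y n) mod (int p ^ n))"

definition pmul :: "nat \<Rightarrow> (nat \<Rightarrow> int) \<Rightarrow> (nat \<Rightarrow> int) \<Rightarrow> nat \<Rightarrow> int" where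
  "pmul p x y = (\<lambda>n. (x n * y n) mod (int p ^ n))"

definition psum :: "nat \<Rightarrow> ('a \<Rightarrow> nat \<Rightarrow> int) \<Rightarrow> 'a set \<Rightarrow> nat \<Rightarrow> int" where
  "psum p f A = (\<lambda>n. (\<Sum>a\<in>A. f a n) mod (int p ^ n))"

definition peval :: "nat \<Rightarrow> int poly \<Rightarrow> (nat \<Rightarrow> int) \<Rightarrow> nat \<Rightarrow> int" where
  "peval p f x = (\<lambda>n. poly f (x n) mod (int p ^ n))"

definition pinv :: "nat \<Rightarrow> (nat \<Rightarrow> int) \<Rightarrow> nat \<Rightarrow> int" where
  "pinv p x = (THE y. y \<in> Zp p \<and> pmul p x y = pone p)"

definition pcbrt :: "nat \<Rightarrow> (nat \<Rightarrow> int) \<Rightarrow> nat \<Rightarrow> int" where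
  "pcbrt p x = (THE y. y \<in> Zp p \<and> pmul p y (pmul p y y) = x)"

definition Ptrib :: "int poly" where
  "Ptrib = [:-1, -1, -1, 1:]"

definition Lam :: "nat \<Rightarrow> (nat \<Rightarrow> int) set" where
  "Lam p = {x \<in> Zp p. peval p Ptrib x = pzero p}"

text \<open>c_lambda = lambda * P'(lambda)^{-1}.\<close>
definition clam :: "nat \<Rightarrow> (nat \<Rightarrow> int) \<Rightarrow> nat \<Rightarrow> int" where
  "clam p l = pmul p l (pinv p (peval p (pderiv Ptrib) l))"

end

theory Submission
  imports Defs
begin


lemma euler_int:
  fixes a :: int and M :: nat
  assumes "coprime a (int M)"
  shows "[a ^ totient M = 1] (mod int M)"
proof (cases "M = 0")
  case True then show ?thesis by simp
next
  case False
  define b where "b = nat (a mod int M)"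
  have ab: "int b = a mod int M" using False by (simp add: b_def)
  have "coprime (a mod int M) (int M)" using assms
    by (metis gcd_red_int coprime_iff_gcd_eq_1 gcd.commute)
  then have "coprime b M" using ab by (metis coprime_int_iff)
  then have "[b ^ totient M = 1] (mod M)" by (rule euler_theorem)
  then have "[int b ^ totient M = 1] (mod int M)"
    by (metis cong_int_iff of_nat_1 of_nat_power)
  moreover have "[a = int b] (mod int M)" using ab by (simp add: cong_def)
  ultimately show ?thesis by (metis cong_pow cong_trans)
qed

lemma cube_k:
  assumes "prime p" "p mod 3 = (2::nat)"
  shows "\<exists>k j. 3 * k = 1 + j * totient (p ^ n)"
proof (cases "totient (p ^ n) = 1")
  case True then show ?thesis by (intro exI[of _ 1] exI[of _ 2]) simp
next
  case False
  have "coprime (3::nat) (totient (p ^ n))"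
  proof (cases "n = 0")
    case True then show ?thesis by simp
  next
    case n: False
    have t: "totient (p ^ n) = p ^ (n - 1) * (p - 1)" using totient_prime_power assms n by auto
    have p3: "\<not> 3 dvd p" using assms by presburger
    have p1: "\<not> 3 dvd (p - 1)" using assms by presburger
    have "coprime (3::nat) p" by (rule prime_imp_coprime) (use p3 in auto)
    moreover have "coprime (3::nat) (p - 1)" by (rule prime_imp_coprime) (use p1 in auto)
    ultimately show ?thesis unfolding t by simp
  qed
  then obtain x where "[3 * x = Suc 0] (mod totient (p ^ n))" using cong_solve_coprime_nat by blast
  then show ?thesis using False cong_to_1'_nat by (metis One_nat_def)
qed

lemma cube_pow:
  fixes z :: int
  assumes "prime p" "coprime z (int p)" "3 * k = 1 + j * totient (p ^ n)"
  shows "[z ^ (3 * k) = z] (mod int p ^ n)"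
proof -
  have c: "coprime z (int (p ^ n))" using assms(2) by simp
  have "[z ^ totient (p ^ n) = 1] (mod int (p ^ n))" using euler_int[OF c] .
  then have e: "[(z ^ totient (p ^ n)) ^ j = 1 ^ j] (mod int (p ^ n))" by (rule cong_pow)
  have "[z * (z ^ totient (p ^ n)) ^ j = z * 1] (mod int (p ^ n))" using cong_scalar_left[OF e, of z] by simp
  moreover have "z ^ (3 * k) = z * (z ^ totient (p ^ n)) ^ j"
    using assms(3) by (simp add: power_mult[symmetric] mult.commute)
  ultimately show ?thesis by simp
qed

lemma cube_inj:
  fixes z w :: int
  assumes "prime p" "p mod 3 = (2::nat)" "coprime z (int p)" "coprime w (int p)"
    "[z ^ 3 = w ^ 3] (mod int p ^ n)"
  shows "[z = w] (mod int p ^ n)"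
proof -
  obtain k j where kj: "3 * k = 1 + j * totient (p ^ n)" using cube_k assms by blast
  have "[(z ^ 3) ^ k = (w ^ 3) ^ k] (mod int p ^ n)" using assms(5) by (rule cong_pow)
  then have "[z ^ (3 * k) = w ^ (3 * k)] (mod int p ^ n)" by (simp add: power_mult)
  then show ?thesis using cube_pow[OF assms(1) assms(3) kj] cube_pow[OF assms(1) assms(4) kj]
    by (meson cong_sym cong_trans)
qed

lemma cube_ex:
  fixes a :: int
  assumes "prime p" "p mod 3 = (2::nat)" "coprime a (int p)"
  shows "\<exists>z. [z ^ 3 = a] (mod int p ^ n)"
proof -
  obtain k j where kj: "3 * k = 1 + j * totient (p ^ n)" using cube_k assms by blast
  have "(a ^ k) ^ 3 = a ^ (3 * k)" by (simp add: power_mult[symmetric] mult.commute)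
  then show ?thesis using cube_pow[OF assms(1) assms(3) kj] by metis
qed



lemma small_ndvd:
  assumes "prime p" "p \<noteq> 2" "p \<noteq> 3" "p \<noteq> 11"
  shows "\<not> int p dvd 2" "\<not> int p dvd 3" "\<not> int p dvd 11"
proof -
  have p1: "p > 1" using assms prime_gt_1_nat by blast
  have e: "int p dvd (numeral k) \<longleftrightarrow> p dvd numeral k" for k
    by (metis int_dvd_int_iff of_nat_numeral)
  have g2: "\<not> p dvd 2"
  proof
    assume h: "p dvd 2"
    have "p \<le> 2" using dvd_imp_le[OF h] by simp
    then show False using p1 assms by linarith
  qed
  have g3: "\<not> p dvd 3"
  proof
    assume h: "p dvd 3"
    have "p \<le> 3" using dvd_imp_le[OF h] by simp
    then have "p = 3" using p1 assms h by (cases "p = 2") auto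
    then show False using assms by simp
  qed
  have g11: "\<not> p dvd 11"
  proof
    assume h: "p dvd 11"
    have "p \<le> 11" using dvd_imp_le[OF h] by simp
    then have "p = 2 \<or> p = 3 \<or> p = 4 \<or> p = 5 \<or> p = 6 \<or> p = 7 \<or> p = 8 \<or> p = 9 \<or> p = 10 \<or> p = 11"
      using p1 by presburger
    then show False using assms h by (elim disjE) simp_all
  qed
  show "\<not> int p dvd 2" "\<not> int p dvd 3" "\<not> int p dvd 11" unfolding e using g2 g3 g11 by auto
qed


lemma dcancel:
  fixes c x :: int
  assumes "coprime c (int p)" "int p ^ n dvd c * x"
  shows "int p ^ n dvd x"
  using assms coprime_dvd_mult_right_iff[of "int p ^ n" c x] by (simp add: coprime_commute)

lemma dmodp:
  fixes x :: int
  assumes "n \<ge> 1" "int p ^ n dvd x"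
  shows "int p dvd x"
  proof -
  have "int p dvd int p ^ n" using assms(1) by (intro dvd_power) auto
  then show ?thesis using assms(2) by (rule dvd_trans)
qed

lemma dcop:
  fixes x y :: int
  assumes "int p dvd x - y" "coprime y (int p)"
  shows "coprime x (int p)"
  using assms cong_imp_coprime[of y x "int p"] by (simp add: cong_iff_dvd_diff dvd_diff_commute)

lemma cube_inj_d:
  fixes z w :: int
  assumes "prime p" "p mod 3 = (2::nat)" "coprime z (int p)" "coprime w (int p)"
    "int p ^ n dvd z ^ 3 - w ^ 3"
  shows "int p ^ n dvd z - w"
  using cube_inj[OF assms(1-4), of n] assms(5) by (simp add: cong_iff_dvd_diff)


lemma lc1: "(M::int) dvd ua \<Longrightarrow> G = ca*ua \<Longrightarrow> M dvd G" by simp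
lemma lc2: "(M::int) dvd ua \<Longrightarrow> M dvd ub \<Longrightarrow> G = ca*ua + cb*ub \<Longrightarrow> M dvd G" by simp
lemma lc3: "(M::int) dvd ua \<Longrightarrow> M dvd ub \<Longrightarrow> M dvd uc \<Longrightarrow> G = ca*ua + cb*ub + cc*uc \<Longrightarrow> M dvd G" by simp
lemma lc4: "(M::int) dvd ua \<Longrightarrow> M dvd ub \<Longrightarrow> M dvd uc \<Longrightarrow> M dvd ud \<Longrightarrow> G = ca*ua + cb*ub + cc*uc + cd*ud \<Longrightarrow> M dvd G" by simp
lemma lc5: "(M::int) dvd ua \<Longrightarrow> M dvd ub \<Longrightarrow> M dvd uc \<Longrightarrow> M dvd ud \<Longrightarrow> M dvd ue \<Longrightarrow> G = ca*ua + cb*ub + cc*uc + cd*ud + ce*ue \<Longrightarrow> M dvd G" by simp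
lemma lc6: "(M::int) dvd ua \<Longrightarrow> M dvd ub \<Longrightarrow> M dvd uc \<Longrightarrow> M dvd ud \<Longrightarrow> M dvd ue \<Longrightarrow> M dvd uf \<Longrightarrow> G = ca*ua + cb*ub + cc*uc + cd*ud + ce*ue + cf*uf \<Longrightarrow> M dvd G" by simp
lemma lc7: "(M::int) dvd ua \<Longrightarrow> M dvd ub \<Longrightarrow> M dvd uc \<Longrightarrow> M dvd ud \<Longrightarrow> M dvd ue \<Longrightarrow> M dvd uf \<Longrightarrow> M dvd ug \<Longrightarrow> G = ca*ua + cb*ub + cc*uc + cd*ud + ce*ue + cf*uf + cg*ug \<Longrightarrow> M dvd G" by simp

lemma core:
  fixes p n :: nat and a1 a2 a3 b1 b2 b3 v1 v2 v3 :: int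
  assumes pr: "prime p" and p3: "p mod 3 = 2" and p2: "p \<noteq> 2" and p11: "p \<noteq> 11" and n1: "n \<ge> 1"
    and hP1: "int p ^ n dvd a1^3 - a1^2 - a1 - 1"
    and hP2: "int p ^ n dvd a2^3 - a2^2 - a2 - 1"
    and hP3: "int p ^ n dvd a3^3 - a3^2 - a3 - 1"
    and d12: "coprime (a1 - a2) (int p)" and d13: "coprime (a1 - a3) (int p)"
    and d23: "coprime (a2 - a3) (int p)"
    and hv1: "int p ^ n dvd (3*a1^2 - 2*a1 - 1) * v1 - 1"
    and hv2: "int p ^ n dvd (3*a2^2 - 2*a2 - 1) * v2 - 1"
    and hv3: "int p ^ n dvd (3*a3^2 - 2*a3 - 1) * v3 - 1"
    and hb1: "int p ^ n dvd b1^3 - a1"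
    and hb2: "int p ^ n dvd b2^3 - a2"
    and hb3: "int p ^ n dvd b3^3 - a3"
  shows "int p ^ n dvd a1*v1*b1 + a2*v2*b2 + a3*v3*b3"
proof -
  define M where "M = int p ^ n"
  note defs = M_def[symmetric]
  have p3': "p \<noteq> 3" using p3 by auto
  note sm = small_ndvd[OF pr p2 p3' p11]
  have pri: "prime (int p)" using pr by simp
  have c2: "coprime (2::int) (int p)" using prime_imp_coprime[OF pri sm(1)] by (simp add: coprime_commute)
  have c3: "coprime (3::int) (int p)" using prime_imp_coprime[OF pri sm(2)] by (simp add: coprime_commute)
  have c11: "coprime (11::int) (int p)" using prime_imp_coprime[OF pri sm(3)] by (simp add: coprime_commute)
  note hP = hP1[folded M_def] hP2[folded M_def] hP3[folded M_def]
  note hb = hb1[folded M_def] hb2[folded M_def] hb3[folded M_def]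
  note hv = hv1[folded M_def] hv2[folded M_def] hv3[folded M_def]
  note AS = power2_eq_square power3_eq_cube algebra_simps
  have "M dvd (a1 - a2) * (a1^2 + a1*a2 + a2^2 - a1 - a2 - 1)"
    by (rule lc2[where ca=1 and cb="-1", OF hP(1) hP(2)]) (simp add: AS)
  then have S12: "M dvd a1^2 + a1*a2 + a2^2 - a1 - a2 - 1"
    using dcancel[OF d12] unfolding M_def by blast
  have "M dvd (a1 - a3) * (a1^2 + a1*a3 + a3^2 - a1 - a3 - 1)"
    by (rule lc2[where ca=1 and cb="-1", OF hP(1) hP(3)]) (simp add: AS)
  then have S13: "M dvd a1^2 + a1*a3 + a3^2 - a1 - a3 - 1"
    using dcancel[OF d13] unfolding M_def by blast
  have "M dvd (a2 - a3) * (a1 + a2 + a3 - 1)"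
    by (rule lc2[where ca=1 and cb="-1", OF S12 S13]) (simp add: AS)
  then have E1: "M dvd a1 + a2 + a3 - 1"
    using dcancel[OF d23] unfolding M_def by blast
  have E2: "M dvd a1*a2 + a1*a3 + a2*a3 + 1"
    by (rule lc2[where ca="-1" and cb="a1+a2", OF S12 E1]) (simp add: AS)
  have E3: "M dvd a1*a2*a3 - 1"
    by (rule lc3[where ca=1 and cb="-(a1^2)" and cc=a1, OF hP(1) E1 E2]) (simp add: AS)
  define B where "B = b1*b2*b3"
  define s where "s = b1+b2+b3"
  define q where "q = b1*b2+b1*b3+b2*b3"
  define t where "t = s^3"
  have B3: "M dvd B^3 - 1"
    by (rule lc4[where ca="b2^3*b3^3" and cb="a1*b3^3" and cc="a1*a2" and cd=1, OF hb(1) hb(2) hb(3) E3]) (simp add: B_def AS)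
  have "coprime (B^3) (int p)" using dcop[OF dmodp[OF n1 B3[unfolded M_def]]] by simp
  then have Bc: "coprime B (int p)" by simp
  have B1: "M dvd B - 1" using cube_inj_d[OF pr p3 Bc coprime_1_left, of n] B3 unfolding M_def by simp
  have F1: "M dvd s^3 - 3*s*q + 2"
    by (rule lc5[where ca=1 and cb=1 and cc=1 and cd=1 and ce="-3", OF hb(1) hb(2) hb(3) E1 B1]) (simp add: B_def s_def q_def AS)
  have F2: "M dvd q^3 - 3*q*s + 4"
    by (rule lc5[where ca="b2^3+b3^3" and cb="a1+b3^3" and cc="a1+a2" and cd=1 and ce="3*q*s - 3*(B+1)", OF hb(1) hb(2) hb(3) E2 B1]) (simp add: B_def s_def q_def AS)
  have G7: "M dvd (t-4)*(t^2-17*t-2)"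
    by (rule lc2[where ca="3*(t+2)^2 - 3*(t+2)*(s^3 - 3*s*q + 2) + (s^3 - 3*s*q + 2)^2 - 27*t" and cb="27*t", OF F1 F2]) (simp add: t_def AS)
  define e1 where "e1 = a1 + a2 + a3"
  define e2 where "e2 = a1*a2 + a1*a3 + a2*a3"
  define e3 where "e3 = a1*a2*a3"
  have ce1: "[e1 = 1] (mod M)" using E1 unfolding e1_def by (simp add: cong_iff_dvd_diff)
  have ce2: "[e2 = -1] (mod M)" using E2 unfolding e2_def by (simp add: cong_iff_dvd_diff)
  have ce3: "[e3 = 1] (mod M)" using E3 unfolding e3_def by (simp add: cong_iff_dvd_diff)
  define D where "D = (a1-a2)*(a2-a3)*(a3-a1)"
  have "[e1^2*e2^2 - 4*e2^3 - 4*e1^3*e3 + 18*e1*e2*e3 - 27*e3^2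
       = 1^2*(-1)^2 - 4*(-1)^3 - 4*1^3*1 + 18*1*(-1)*1 - 27*1^2] (mod M)"
    by (intro cong_add cong_diff cong_mult cong_pow cong_refl ce1 ce2 ce3)
  moreover have "e1^2*e2^2 - 4*e2^3 - 4*e1^3*e3 + 18*e1*e2*e3 - 27*e3^2 = D^2"
    by (simp add: e1_def e2_def e3_def D_def AS)
  ultimately have "[D^2 = -44] (mod M)" by simp
  then have G8: "M dvd D^2 + 44" by (simp add: cong_iff_dvd_diff)
  have G8p: "int p dvd D^2 + 44" using dmodp[OF n1 G8[unfolded M_def]] .
  have c132: "coprime (132::int) (int p)"
  proof -
    have "(132::int) = 2*2*3*11" by simp
    then show ?thesis using c2 c3 c11 by (metis coprime_mult_left_iff)
  qed
  have Rc: "coprime (t^2-17*t-2) (int p)"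
  proof -
    have "\<not> int p dvd t^2 - 17*t - 2"
    proof
      assume Rp: "int p dvd t^2 - 17*t - 2"
      define X where "X = (2*t - 17)*D"
      have X1: "int p dvd X^2 + 3*66^2"
        by (rule lc2[where ca="(2*t-17)^2" and cb="-176", OF G8p Rp]) (simp add: X_def AS)
      have X2: "int p dvd (X - 66)^3 - 132^3"
        by (rule lc1[where ca="X - 66 - 132", OF X1]) (simp add: AS)
      have c1323: "coprime ((132::int)^3) (int p)" using c132 by (metis coprime_power_left_iff)
      have "coprime ((X - 66)^3) (int p)" using dcop[OF X2 c1323] .
      then have "coprime (X - 66) (int p)" by simp
      then have "int p ^ 1 dvd (X - 66) - 132" using cube_inj_d[OF pr p3 _ c132, of "X - 66" 1] X2 by simp
      then have X3: "int p dvd X - 198" by simp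
      have "int p dvd 2^4*3^3*11^2"
        by (rule lc2[where ca=1 and cb="-(X+198)", OF X1 X3]) (simp add: AS)
      then have "int p dvd 2^4 \<or> int p dvd 3^3 \<or> int p dvd 11^2"
        using prime_dvd_mult_iff[OF pri] by metis
      then show False using sm prime_dvd_power[OF pri] by metis
    qed
    then show ?thesis using prime_imp_coprime[OF pri] coprime_commute by blast
  qed
  have G9: "M dvd t - 4" using dcancel[OF Rc, of n "t - 4"] G7 unfolding M_def by (simp add: mult.commute)
  have q3: "M dvd q^3 - 2"
    by (rule lc3[where ca=1 and cb="-1" and cc=1, OF G9 F1 F2]) (simp add: t_def AS)
  have q6: "M dvd (q^2)^3 - s^3"
    by (rule lc2[where ca="q^3+2" and cb="-1", OF q3 G9]) (simp add: t_def AS)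
  have c4: "coprime (4::int) (int p)" using c2 by (metis coprime_mult_left_iff mult_2 numeral_Bit0)
  have "int p dvd s^3 - 4" using dmodp[OF n1 G9[unfolded M_def]] by (simp add: t_def)
  then have "coprime (s^3) (int p)" using dcop c4 by blast
  then have sc: "coprime s (int p)" by simp
  have "int p dvd (q^2)^3 - s^3" using dmodp[OF n1 q6[unfolded M_def]] .
  then have "coprime ((q^2)^3) (int p)" using dcop \<open>coprime (s^3) (int p)\<close> by blast
  then have qc: "coprime (q^2) (int p)" by simp
  have Q: "M dvd q^2 - s" using cube_inj_d[OF pr p3 qc sc] q6 unfolding M_def by blast
  have U1: "M dvd (a1-a2)*(a1-a3)*v1 - 1"
    by (rule lc3[where ca=1 and cb="-2*a1*v1" and cc=v1, OF hv(1) E1 E2]) (simp add: AS)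
  have U2: "M dvd (a2-a1)*(a2-a3)*v2 - 1"
    by (rule lc3[where ca=1 and cb="-2*a2*v2" and cc=v2, OF hv(2) E1 E2]) (simp add: AS)
  have U3: "M dvd (a3-a1)*(a3-a2)*v3 - 1"
    by (rule lc3[where ca=1 and cb="-2*a3*v3" and cc=v3, OF hv(3) E1 E2]) (simp add: AS)
  have cu1: "[(a1-a2)*(a1-a3)*v1 = 1] (mod M)" using U1 by (simp add: cong_iff_dvd_diff)
  have cu2: "[(a2-a1)*(a2-a3)*v2 = 1] (mod M)" using U2 by (simp add: cong_iff_dvd_diff)
  have cu3: "[(a3-a1)*(a3-a2)*v3 = 1] (mod M)" using U3 by (simp add: cong_iff_dvd_diff)
  have ca1: "[a1 = b1^3] (mod M)" using hb(1) by (simp add: cong_iff_dvd_diff dvd_diff_commute)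
  have ca2: "[a2 = b2^3] (mod M)" using hb(2) by (simp add: cong_iff_dvd_diff dvd_diff_commute)
  have ca3: "[a3 = b3^3] (mod M)" using hb(3) by (simp add: cong_iff_dvd_diff dvd_diff_commute)
  have cQ: "[q^2 = s] (mod M)" using Q by (simp add: cong_iff_dvd_diff)
  have cB: "[B = 1] (mod M)" using B1 by (simp add: cong_iff_dvd_diff)
  have "D*(a1*v1*b1 + a2*v2*b2 + a3*v3*b3) =
     -(a1*b1*(a2-a3)*((a1-a2)*(a1-a3)*v1) + a2*b2*(a3-a1)*((a2-a1)*(a2-a3)*v2) + a3*b3*(a1-a2)*((a3-a1)*(a3-a2)*v3))"
    by (simp add: D_def AS)
  also have "[... = -(a1*b1*(a2-a3)*1 + a2*b2*(a3-a1)*1 + a3*b3*(a1-a2)*1)] (mod M)"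
    by (intro cong_minus_minus_iff[THEN iffD2] cong_add cong_mult cong_refl cu1 cu2 cu3)
  also have "-(a1*b1*(a2-a3)*1 + a2*b2*(a3-a1)*1 + a3*b3*(a1-a2)*1) = -(a1*b1*(a2-a3) + a2*b2*(a3-a1) + a3*b3*(a1-a2))"
    by simp
  also have "[... = -(b1^3*b1*(b2^3-b3^3) + b2^3*b2*(b3^3-b1^3) + b3^3*b3*(b1^3-b2^3))] (mod M)"
    by (intro cong_minus_minus_iff[THEN iffD2] cong_add cong_mult cong_diff cong_refl ca1 ca2 ca3)
  also have "-(b1^3*b1*(b2^3-b3^3) + b2^3*b2*(b3^3-b1^3) + b3^3*b3*(b1^3-b2^3)) = (b1-b2)*(b2-b3)*(b3-b1)*(q^2 - s*B)"
    by (simp add: q_def s_def B_def AS)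
  also have "[... = (b1-b2)*(b2-b3)*(b3-b1)*(s - s*1)] (mod M)"
    by (intro cong_mult cong_diff cong_refl cQ cB)
  finally have "[D*(a1*v1*b1 + a2*v2*b2 + a3*v3*b3) = 0] (mod M)" by simp
  then have "M dvd D*(a1*v1*b1 + a2*v2*b2 + a3*v3*b3)" by (simp add: cong_0_iff)
  moreover have "coprime D (int p)"
  proof -
    have "coprime (a3 - a1) (int p)" using d13 by (metis coprime_minus_left_iff minus_diff_eq)
    then show ?thesis using d12 d23 unfolding D_def by simp
  qed
  ultimately show ?thesis using dcancel unfolding M_def by blast
qed



lemma polyP: "poly Ptrib x = x^3 - x^2 - x - 1"
  by (simp add: Ptrib_def power2_eq_square power3_eq_cube algebra_simps)

lemma polyP': "poly (pderiv Ptrib) x = 3*x^2 - 2*x - 1"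
  by (simp add: Ptrib_def pderiv_pCons power2_eq_square algebra_simps)

lemma zp_range:
  assumes "x \<in> Zp p" shows "0 \<le> x n" "x n < int p ^ n"
  using assms unfolding Zp_def by auto

lemma zp_mod:
  assumes "x \<in> Zp p" shows "x n mod int p ^ n = x n"
  using zp_range[OF assms] by simp

lemma zp_coh:
  assumes "x \<in> Zp p" "k \<le> n"
  shows "x n mod int p ^ k = x k"
  using assms(2)
proof (induction n)
  case 0 then show ?case using zp_range[OF assms(1), of 0] by simp
next
  case (Suc n)
  show ?case
  proof (cases "k = Suc n")
    case True then show ?thesis using zp_mod[OF assms(1), of "Suc n"] by (simp del: power_Suc)
  next
    case False
    then have kn: "k \<le> n" using Suc.prems by simp
    have d: "int p ^ k dvd int p ^ n" using kn by (simp add: le_imp_power_dvd)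
    have "x (Suc n) mod int p ^ k = (x (Suc n) mod int p ^ n) mod int p ^ k"
      using d by (simp add: mod_mod_cancel)
    also have "x (Suc n) mod int p ^ n = x n" using assms(1) unfolding Zp_def by auto
    finally show ?thesis using Suc.IH kn by simp
  qed
qed

lemma zp_cong:
  assumes "x \<in> Zp p" "k \<le> n"
  shows "[x n = x k] (mod int p ^ k)"
  using zp_coh[OF assms] zp_mod[OF assms(1), of k] by (simp add: cong_def)

lemma zp_eq:
  assumes "x \<in> Zp p" "y \<in> Zp p" "\<And>n. [x n = y n] (mod int p ^ n)"
  shows "x = y"
proof
  fix n
  show "x n = y n" using assms(3)[of n] zp_mod[OF assms(1), of n] zp_mod[OF assms(2), of n]
    by (simp add: cong_def)
qed

lemma Zp_construct:
  assumes p0: "p > 0"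
    and ex: "\<And>n. \<exists>z. R n z"
    and md: "\<And>n z. R n z \<Longrightarrow> R n (z mod int p ^ n)"
    and sc: "\<And>n z. R (Suc n) z \<Longrightarrow> R n z"
    and un: "\<And>n z w. R n z \<Longrightarrow> R n w \<Longrightarrow> [z = w] (mod int p ^ n)"
  shows "\<exists>y\<in>Zp p. \<forall>n. R n (y n)"
proof -
  define y where "y n = (SOME z. R n z) mod int p ^ n" for n
  have Ry: "R n (y n)" for n unfolding y_def by (rule md, rule someI_ex, rule ex)
  have pos: "int p ^ n > 0" for n using p0 by simp
  have "y \<in> Zp p"
    unfolding Zp_def
  proof (intro CollectI allI conjI)
    fix n
    show "0 \<le> y n" "y n < int p ^ n" unfolding y_def using pos[of n] by simp_all
    have "[y (Suc n) = y n] (mod int p ^ n)" using un[OF sc[OF Ry[of "Suc n"]] Ry[of n]] .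
    then have "y (Suc n) mod int p ^ n = y n mod int p ^ n" by (simp add: cong_def)
    also have "y n mod int p ^ n = y n" unfolding y_def by simp
    finally show "y (Suc n) mod int p ^ n = y n" .
  qed
  then show ?thesis using Ry by blast
qed

lemma the_Zp:
  assumes ex: "\<exists>y\<in>Zp p. \<forall>n. R n (y n)"
    and un: "\<And>n z w. R n z \<Longrightarrow> R n w \<Longrightarrow> [z = w] (mod int p ^ n)"
    and eqv: "\<And>y. y \<in> Zp p \<Longrightarrow> Q y \<longleftrightarrow> (\<forall>n. R n (y n))"
  shows "R n ((THE y. y \<in> Zp p \<and> Q y) n)"
proof -
  obtain y where y: "y \<in> Zp p" "\<forall>n. R n (y n)" using ex by blast
  have "(THE y. y \<in> Zp p \<and> Q y) = y"
  proof (rule the_equality)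
    show "y \<in> Zp p \<and> Q y" using y eqv by blast
  next
    fix y' assume "y' \<in> Zp p \<and> Q y'"
    then have "y' \<in> Zp p" "\<forall>n. R n (y' n)" using eqv by blast+
    then show "y' = y" using zp_eq[of y' p y] y un by blast
  qed
  then show ?thesis using y by simp
qed



lemma lam_facts:
  assumes "l \<in> Lam p"
  shows "l \<in> Zp p" "int p ^ n dvd (l n)^3 - (l n)^2 - l n - 1"
proof -
  show "l \<in> Zp p" using assms unfolding Lam_def by auto
  have "peval p Ptrib l n = pzero p n" using assms unfolding Lam_def by auto
  then show "int p ^ n dvd (l n)^3 - (l n)^2 - l n - 1"
    unfolding peval_def pzero_def polyP by (simp add: mod_eq_0_iff_dvd)
qed

lemma lam_unit:
  assumes "l \<in> Lam p" "n \<ge> 1"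
  shows "coprime (l n) (int p)"
proof -
  have "int p dvd (l n * ((l n)^2 - l n - 1)) - 1"
    using dmodp[OF assms(2) lam_facts(2)[OF assms(1), of n]]
    by (simp add: power2_eq_square power3_eq_cube algebra_simps)
  then have "coprime (l n * ((l n)^2 - l n - 1)) (int p)" using dcop coprime_1_left by blast
  then show ?thesis by simp
qed

lemma lam_deriv:
  assumes pr: "prime p" and p2: "p \<noteq> 2" and p11: "p \<noteq> 11" and p3: "p mod 3 = 2"
    and l: "l \<in> Lam p" and n1: "n \<ge> 1"
  shows "coprime (3*(l n)^2 - 2*(l n) - 1) (int p)"
proof -
  have p3': "p \<noteq> 3" using p3 by auto
  note sm = small_ndvd[OF pr p2 p3' p11]
  have pri: "prime (int p)" using pr by simp
  have "\<not> int p dvd 3*(l n)^2 - 2*(l n) - 1"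
  proof
    assume h: "int p dvd 3*(l n)^2 - 2*(l n) - 1"
    have hp: "int p dvd (l n)^3 - (l n)^2 - l n - 1" using dmodp[OF n1 lam_facts(2)[OF l, of n]] .
    have "int p dvd - (2^2 * 11)"
      by (rule lc2[where ca="46 - 24 * l n" and cb="-2 - 18 * l n + 8 * (l n)^2", OF hp h])
        (simp add: power2_eq_square power3_eq_cube algebra_simps)
    then have "int p dvd 2^2 \<or> int p dvd 11" using prime_dvd_mult_iff[OF pri] by (metis dvd_minus_iff)
    then show False using sm prime_dvd_power[OF pri] by metis
  qed
  then show ?thesis using prime_imp_coprime[OF pri] coprime_commute by blast
qed

lemma lam_diff:
  assumes pr: "prime p" and p2: "p \<noteq> 2" and p11: "p \<noteq> 11" and p3: "p mod 3 = 2"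
    and l1: "l1 \<in> Lam p" and l2: "l2 \<in> Lam p" and ne: "l1 \<noteq> l2" and n1: "n \<ge> 1"
  shows "coprime (l1 n - l2 n) (int p)"
proof (rule ccontr)
  assume nc: "\<not> coprime (l1 n - l2 n) (int p)"
  have pri: "prime (int p)" using pr by simp
  have hn: "int p dvd l1 n - l2 n" using nc prime_imp_coprime[OF pri] coprime_commute by blast
  have z1: "l1 \<in> Zp p" and z2: "l2 \<in> Zp p" using lam_facts l1 l2 by blast+
  have c1: "int p dvd l k - l 1" if "l \<in> Zp p" "k \<ge> 1" for l k
    using zp_cong[OF that(1) that(2)] by (simp add: cong_iff_dvd_diff)
  have "[l1 k = l2 k] (mod int p ^ k)" for k
  proof (cases "k = 0")
    case True then show ?thesis by simp
  next
    case False
    then have k1: "k \<ge> 1" by simp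
    define a where "a = l1 k"
    define b where "b = l2 k"
    have ab: "int p dvd a - b"
      by (rule lc5[where ca=1 and cb="-1" and cc="-1" and cd=1 and ce=1,
            OF c1[OF z1 k1] c1[OF z2 k1] c1[OF z1 n1] c1[OF z2 n1] hn]) (simp add: a_def b_def)
    have Ga: "coprime (3*a^2 - 2*a - 1) (int p)" unfolding a_def by (rule lam_deriv[OF pr p2 p11 p3 l1 k1])
    have "int p dvd (a^2 + a*b + b^2 - a - b - 1) - (3*a^2 - 2*a - 1)"
      by (rule lc1[where ca="-(b + 2*a - 1)", OF ab]) (simp add: power2_eq_square algebra_simps)
    then have Sc: "coprime (a^2 + a*b + b^2 - a - b - 1) (int p)" using dcop Ga by blast
    have "int p ^ k dvd (a - b) * (a^2 + a*b + b^2 - a - b - 1)"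
      by (rule lc2[where ca=1 and cb="-1", OF lam_facts(2)[OF l1, of k, folded a_def] lam_facts(2)[OF l2, of k, folded b_def]])
        (simp add: power2_eq_square power3_eq_cube algebra_simps)
    then have "int p ^ k dvd a - b" using dcancel[OF Sc] by (metis mult.commute)
    then show ?thesis unfolding a_def b_def by (simp add: cong_iff_dvd_diff)
  qed
  then have "l1 = l2" using zp_eq[OF z1 z2] by blast
  then show False using ne by simp
qed


lemma cbrt_spec:
  assumes pr: "prime p" and p3: "p mod 3 = 2" and l: "l \<in> Lam p"
  shows "int p ^ n dvd (pcbrt p l n)^3 - l n"
proof -
  have p0: "p > 0" using pr prime_gt_0_nat by blast
  have zl: "l \<in> Zp p" using lam_facts(1)[OF l] .
  define R where "R n z = [z^3 = l n] (mod int p ^ n)" for n z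
  have un: "[z = w] (mod int p ^ n)" if "R n z" "R n w" for n z w
  proof (cases "n = 0")
    case True then show ?thesis by simp
  next
    case False
    then have n1: "n \<ge> 1" by simp
    have cz: "coprime z (int p)"
    proof -
      have "int p dvd z^3 - l n" using that(1) dmodp[OF n1] unfolding R_def by (simp add: cong_iff_dvd_diff)
      then have "coprime (z^3) (int p)" using dcop lam_unit[OF l n1] by blast
      then show ?thesis by simp
    qed
    have cw: "coprime w (int p)"
    proof -
      have "int p dvd w^3 - l n" using that(2) dmodp[OF n1] unfolding R_def by (simp add: cong_iff_dvd_diff)
      then have "coprime (w^3) (int p)" using dcop lam_unit[OF l n1] by blast
      then show ?thesis by simp
    qed
    have "[z^3 = w^3] (mod int p ^ n)" using that unfolding R_def by (meson cong_sym cong_trans)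
    then show ?thesis using cube_inj[OF pr p3 cz cw] by blast
  qed
  have ex: "\<exists>y\<in>Zp p. \<forall>n. R n (y n)"
  proof (rule Zp_construct[OF p0])
    fix n
    show "\<exists>z. R n z"
    proof (cases "n = 0")
      case True then show ?thesis unfolding R_def by simp
    next
      case False
      then show ?thesis using cube_ex[OF pr p3 lam_unit[OF l], of n n] unfolding R_def by simp
    qed
  next
    fix n z assume "R n z"
    moreover have "[(z mod int p ^ n)^3 = z^3] (mod int p ^ n)" by (rule cong_pow) simp
    ultimately show "R n (z mod int p ^ n)" unfolding R_def using cong_trans by blast
  next
    fix n z assume h: "R (Suc n) z"
    have "[z^3 = l (Suc n)] (mod int p ^ n)"
      using h unfolding R_def by (rule cong_dvd_modulus) (simp add: le_imp_power_dvd)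
    moreover have "[l (Suc n) = l n] (mod int p ^ n)" using zp_cong[OF zl, of n "Suc n"] by simp
    ultimately show "R n z" unfolding R_def using cong_trans by blast
  next
    fix n z w assume "R n z" "R n w" then show "[z = w] (mod int p ^ n)" by (rule un)
  qed
  have eqv: "pmul p y (pmul p y y) = l \<longleftrightarrow> (\<forall>n. R n (y n))" if "y \<in> Zp p" for y
  proof -
    have e: "pmul p y (pmul p y y) n = (y n ^ 3) mod int p ^ n" for n
      unfolding pmul_def by (simp add: mod_mult_right_eq power3_eq_cube mult.assoc)
    have "pmul p y (pmul p y y) = l \<longleftrightarrow> (\<forall>n. pmul p y (pmul p y y) n = l n)" by (simp add: fun_eq_iff)
    also have "\<dots> \<longleftrightarrow> (\<forall>n. R n (y n))" unfolding e R_def cong_def using zp_mod[OF zl] by simp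
    finally show ?thesis .
  qed
  have "R n ((THE y. y \<in> Zp p \<and> pmul p y (pmul p y y) = l) n)"
    by (rule the_Zp[OF ex un eqv]) 
  then show ?thesis unfolding R_def pcbrt_def by (simp add: cong_iff_dvd_diff)
qed

lemma inv_spec:
  assumes pr: "prime p" and p2: "p \<noteq> 2" and p11: "p \<noteq> 11" and p3: "p mod 3 = 2"
    and l: "l \<in> Lam p"
  shows "int p ^ n dvd (3*(l n)^2 - 2*(l n) - 1) * pinv p (peval p (pderiv Ptrib) l) n - 1"
proof -
  have p0: "p > 0" using pr prime_gt_0_nat by blast
  have zl: "l \<in> Zp p" using lam_facts(1)[OF l] .
  define G where "G n = 3*(l n)^2 - 2*(l n) - 1" for n
  define R where "R n z = [G n * z = 1] (mod int p ^ n)" for n z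
  have Gc: "coprime (G n) (int p ^ n)" if "n \<ge> 1" for n
    using lam_deriv[OF pr p2 p11 p3 l that] unfolding G_def by simp
  have un: "[z = w] (mod int p ^ n)" if "R n z" "R n w" for n z w
  proof (cases "n = 0")
    case True then show ?thesis by simp
  next
    case False
    have "[G n * z = G n * w] (mod int p ^ n)" using that unfolding R_def by (meson cong_sym cong_trans)
    then show ?thesis using cong_mult_lcancel[OF Gc] False by simp
  qed
  have ex: "\<exists>y\<in>Zp p. \<forall>n. R n (y n)"
  proof (rule Zp_construct[OF p0])
    fix n
    show "\<exists>z. R n z"
    proof (cases "n = 0")
      case True then show ?thesis unfolding R_def by simp
    next
      case False
      then show ?thesis using cong_solve_coprime_int[OF Gc, of n] unfolding R_def by simp
    qed
  next
    fix n z assume "R n z"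
    moreover have "[G n * (z mod int p ^ n) = G n * z] (mod int p ^ n)" by (intro cong_mult cong_refl) simp
    ultimately show "R n (z mod int p ^ n)" unfolding R_def using cong_trans by blast
  next
    fix n z assume h: "R (Suc n) z"
    have "[G (Suc n) * z = 1] (mod int p ^ n)"
      using h unfolding R_def by (rule cong_dvd_modulus) (simp add: le_imp_power_dvd)
    moreover have cl: "[l (Suc n) = l n] (mod int p ^ n)" using zp_cong[OF zl, of n "Suc n"] by simp
    have "[G n * z = G (Suc n) * z] (mod int p ^ n)" unfolding G_def
      by (intro cong_mult cong_diff cong_pow cong_refl cong_sym[OF cl])
    ultimately show "R n z" unfolding R_def using cong_trans by blast
  next
    fix n z w assume "R n z" "R n w" then show "[z = w] (mod int p ^ n)" by (rule un)
  qed
  have eqv: "pmul p (peval p (pderiv Ptrib) l) y = pone p \<longleftrightarrow> (\<forall>n. R n (y n))" if "y \<in> Zp p" for y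
  proof -
    have e: "pmul p (peval p (pderiv Ptrib) l) y n = (G n * y n) mod int p ^ n" for n
      unfolding pmul_def peval_def polyP' G_def by (simp add: mod_mult_left_eq)
    have "pmul p (peval p (pderiv Ptrib) l) y = pone p \<longleftrightarrow> (\<forall>n. pmul p (peval p (pderiv Ptrib) l) y n = pone p n)"
      by (simp add: fun_eq_iff)
    also have "\<dots> \<longleftrightarrow> (\<forall>n. R n (y n))" unfolding e R_def cong_def pone_def by simp
    finally show ?thesis .
  qed
  have "R n ((THE y. y \<in> Zp p \<and> pmul p (peval p (pderiv Ptrib) l) y = pone p) n)"
    by (rule the_Zp[OF ex un eqv])
  then show ?thesis unfolding R_def pinv_def G_def by (simp add: cong_iff_dvd_diff)
qed



lemma modmul_cong: "[((a*v) mod M * b) mod M = a*v*(b::int)] (mod M)"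
  by (simp add: cong_def mod_mult_left_eq)

theorem proposition15:
  fixes p :: nat
  assumes "prime p" and "p \<noteq> 2" and "p \<noteq> 11" and "p mod 3 = 2"
    and "card (Lam p) = 3"
  shows "psum p (\<lambda>l. pmul p (clam p l) (pcbrt p l)) (Lam p) = pzero p"
proof -
  note pr = assms(1) and p2 = assms(2) and p11 = assms(3) and p3 = assms(4)
  obtain l1 l2 l3 where L: "Lam p = {l1, l2, l3}" and ne: "l1 \<noteq> l2" "l2 \<noteq> l3" "l1 \<noteq> l3"
    using assms(5) card_3_iff by metis
  have l1: "l1 \<in> Lam p" and l2: "l2 \<in> Lam p" and l3: "l3 \<in> Lam p" using L by auto
  define v where "v l = pinv p (peval p (pderiv Ptrib) l)" for l
  define f where "f l = pmul p (clam p l) (pcbrt p l)" for l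
  have fn: "f l n = ((l n * v l n) mod int p ^ n * pcbrt p l n) mod int p ^ n" for l n
    unfolding f_def clam_def pmul_def v_def by simp
  show ?thesis
  proof
    fix n
    have "psum p f (Lam p) n = (f l1 n + f l2 n + f l3 n) mod int p ^ n"
      unfolding psum_def L using ne by (simp add: add.assoc)
    also have "\<dots> = 0"
    proof (cases "n = 0")
      case True then show ?thesis by simp
    next
      case False
      then have n1: "n \<ge> 1" by simp
      have "int p ^ n dvd l1 n * v l1 n * pcbrt p l1 n + l2 n * v l2 n * pcbrt p l2 n + l3 n * v l3 n * pcbrt p l3 n"
        by (rule core[OF pr p3 p2 p11 n1 lam_facts(2)[OF l1] lam_facts(2)[OF l2] lam_facts(2)[OF l3]
              lam_diff[OF pr p2 p11 p3 l1 l2 ne(1) n1] lam_diff[OF pr p2 p11 p3 l1 l3 ne(3) n1]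
              lam_diff[OF pr p2 p11 p3 l2 l3 ne(2) n1]
              inv_spec[OF pr p2 p11 p3 l1, folded v_def] inv_spec[OF pr p2 p11 p3 l2, folded v_def]
              inv_spec[OF pr p2 p11 p3 l3, folded v_def]
              cbrt_spec[OF pr p3 l1] cbrt_spec[OF pr p3 l2] cbrt_spec[OF pr p3 l3]])
      moreover have "[f l1 n + f l2 n + f l3 n = l1 n * v l1 n * pcbrt p l1 n + l2 n * v l2 n * pcbrt p l2 n + l3 n * v l3 n * pcbrt p l3 n] (mod int p ^ n)"
        unfolding fn by (intro cong_add modmul_cong)
      ultimately show ?thesis by (simp add: cong_iff_dvd_diff mod_eq_0_iff_dvd dvd_diff_commute)
         (metis cong_0_iff cong_dvd_iff cong_iff_dvd_diff)
    qed
    finally show "psum p (\<lambda>l. pmul p (clam p l) (pcbrt p l)) (Lam p) n = pzero p n"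
      unfolding f_def pzero_def by simp
  qed
qed


end
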